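(* Let $i\in[1:p]$ be fixed. Assume that for all $\emptyset\subsetneq u\subsetneq[1:p]$ and $m\in[1:M]$, $\widehat W_u(m)$ is computed with cost $\kappa N_O$ as $\widehat W_u(m)=\frac1{N_O}\sum_{n=1}^{N_O}\widehat W_u^{(n)}(m)$ with i.i.d. $(\widehat W_u^{(n)}(m))_n$, all $(\widehat W_u(m))_{u,m}$ independent, and $\mathrm{E}(\widehat W_u^{(1)}(1))=W_u$ (unbiased). Then, to minimize over $N_O$ and $M$ the variance of $\widehat\eta_i$ (given by the random-permutation $W$-aggregation procedure) with a fixed cost $\kappa MN_O(p-1)=\kappa C(p-1)$ for some $C\in\mathbb{N}^*$, one must choose $N_O=1$ and $M=C$.
   Context: Setting: $\mathbf{X}=(X_1,\dots,X_p)$, $Y=f(\mathbf{X})$, $f\in L^2(\mathbb{P}_\mathbf{X})$; $W_u$ is $V_u=\mathrm{Var}(\mathrm{E}(Y|\mathbf{X}_u))$ or $E_u=\mathrm{E}(\mathrm{Var}(Y|\mathbf{X}_{-u}))$, $W_\emptyset=0$, $W_{[1:p]}=\mathrm{Var}(Y)$ known. For a permutation $\sigma$, $P_i(\sigma)=\{\sigma(j):j\in[1:\sigma^{-1}(i)-1]\}$. Random-permutation procedure: with $\sigma_1,\dots,\sigma_M$ i.i.d. uniform on the permutations of $[1:p]$, $\widehat\eta_i=\frac{1}{M\mathrm{Var}(Y)}\sum_{m=1}^M(\widehat W_{P_i(\sigma_m)\cup\{i\}}(m)-\widehat W_{P_i(\sigma_m)}(m))$, each $\widehat W_u(m)$ having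 accuracy $N_u=N_O$ for all $u$. *)

theory Defs
  imports "HOL-Probability.Probability" "HOL-Combinatorics.Permutations"
begin

definition perms :: "nat \<Rightarrow> (nat \<Rightarrow> nat) set" where
  "perms p = {s. s permutes {1..p}}"

definition Pset :: "nat \<Rightarrow> (nat \<Rightarrow> nat) \<Rightarrow> nat set" where
  "Pset i s = s ` {1..<inv s i}"

definition gen_alg :: "'b measure \<Rightarrow> ('b \<Rightarrow> nat \<Rightarrow> real) \<Rightarrow> nat set \<Rightarrow> 'b measure" where
  "gen_alg Q X u = vimage_algebra (space Q) (\<lambda>w. restrict (X w) u) (PiM u (\<lambda>_. borel))"

definition Yof :: "((nat \<Rightarrow> real) \<Rightarrow> real) \<Rightarrow> ('b \<Rightarrow> nat \<Rightarrow> real) \<Rightarrow> 'b \<Rightarrow> real" where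
  "Yof f X = (\<lambda>w. f (X w))"

definition Vu :: "'b measure \<Rightarrow> ('b \<Rightarrow> nat \<Rightarrow> real) \<Rightarrow> ((nat \<Rightarrow> real) \<Rightarrow> real) \<Rightarrow> nat set \<Rightarrow> real" where
  "Vu Q X f u = prob_space.variance Q (real_cond_exp Q (gen_alg Q X u) (Yof f X))"

definition Eu :: "nat \<Rightarrow> 'b measure \<Rightarrow> ('b \<Rightarrow> nat \<Rightarrow> real) \<Rightarrow> ((nat \<Rightarrow> real) \<Rightarrow> real) \<Rightarrow> nat set \<Rightarrow> real" where
  "Eu p Q X f u = prob_space.expectation Q
     (real_cond_exp Q (gen_alg Q X ({1..p} - u))
        (\<lambda>w. (Yof f X w - real_cond_exp Q (gen_alg Q X ({1..p} - u)) (Yof f X) w)^2))"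

text \<open>Estimator of W_u for the m-th permutation with accuracy N:
  W_emptyset = 0 and W_[1:p] = Var(Y) are known; otherwise the empirical mean of
  the N i.i.d. samples Z u m 1, ..., Z u m N.\<close>
definition What :: "nat \<Rightarrow> real \<Rightarrow> (nat set \<Rightarrow> nat \<Rightarrow> nat \<Rightarrow> 'a \<Rightarrow> real)
     \<Rightarrow> nat \<Rightarrow> nat set \<Rightarrow> nat \<Rightarrow> 'a \<Rightarrow> real" where
  "What p VY Z N u m w =
     (if u = {} then 0 else if u = {1..p} then VY
      else (1 / real N) * (\<Sum>n=1..N. Z u m n w))"

definition eta_hat :: "nat \<Rightarrow> real \<Rightarrow> (nat \<Rightarrow> 'a \<Rightarrow> (nat \<Rightarrow> nat))
     \<Rightarrow> (nat set \<Rightarrow> nat \<Rightarrow> nat \<Rightarrow> 'a \<Rightarrow> real) \<Rightarrow> nat \<Rightarrow> nat \<Rightarrow> nat \<Rightarrow> 'a \<Rightarrow> real" where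
  "eta_hat p VY sig Z i N M w =
     (1 / (real M * VY)) * (\<Sum>m=1..M.
        What p VY Z N (Pset i (sig m w) \<union> {i}) m w - What p VY Z N (Pset i (sig m w)) m w)"

text \<open>Index set of the independent family: permutations sigma_m (m >= 1) and
  samples Z u m n for proper nonempty u, m >= 1, n >= 1.\<close>
definition idx :: "nat \<Rightarrow> (nat + nat set \<times> nat \<times> nat) set" where
  "idx p = Inl ` {1..} \<union>
     Inr ` {(u, m, n). u \<subseteq> {1..p} \<and> u \<noteq> {} \<and> u \<noteq> {1..p} \<and> 1 \<le> m \<and> 1 \<le> n}"

end

theory Submission
  imports Defs
begin

definition proper :: "nat \<Rightarrow> nat set \<Rightarrow> bool" where
  "proper p u \<longleftrightarrow> u \<subseteq> {1..p} \<and> u \<noteq> {} \<and> u \<noteq> {1..p}"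

definition Zp :: "nat \<Rightarrow> (nat set \<Rightarrow> nat \<Rightarrow> nat \<Rightarrow> 'a \<Rightarrow> real) \<Rightarrow> nat set \<Rightarrow> nat \<Rightarrow> nat \<Rightarrow> 'a \<Rightarrow> real" where
  "Zp p Z u m n w = (if proper p u then Z u m n w else 0)"

definition Ind :: "(nat \<Rightarrow> 'a \<Rightarrow> nat \<Rightarrow> nat) \<Rightarrow> nat \<Rightarrow> (nat \<Rightarrow> nat) \<Rightarrow> 'a \<Rightarrow> real" where
  "Ind sig m s w = (if sig m w = s then 1 else 0)"

definition GG :: "(nat \<Rightarrow> 'a \<Rightarrow> nat \<Rightarrow> nat) \<Rightarrow> (nat set \<Rightarrow> nat \<Rightarrow> nat \<Rightarrow> 'a \<Rightarrow> real)
   \<Rightarrow> (nat \<Rightarrow> nat \<Rightarrow> nat) \<Rightarrow> (nat + nat set \<times> nat \<times> nat \<Rightarrow> real \<Rightarrow> real)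
   \<Rightarrow> nat + nat set \<times> nat \<times> nat \<Rightarrow> 'a \<Rightarrow> real" where
  "GG sig Z s h k w = (case k of Inl m \<Rightarrow> Ind sig m (s m) w | Inr (u, m, n) \<Rightarrow> h k (Z u m n w))"

lemma GG_Inl[simp]: "GG sig Z s h (Inl m) = Ind sig m (s m)"
  by (simp add: GG_def fun_eq_iff)

lemma GG_Inr[simp]: "GG sig Z s h (Inr (u, m, n)) = (\<lambda>w. h (Inr (u, m, n)) (Z u m n w))"
  by (simp add: GG_def fun_eq_iff)

lemma Ind_fun: "Ind sig m s = (\<lambda>w. if sig m w = s then 1 else 0)"
  by (simp add: Ind_def fun_eq_iff)

lemma idx_Inr: "Inr (u, m, n) \<in> idx p \<longleftrightarrow> proper p u \<and> 1 \<le> m \<and> 1 \<le> n"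
  unfolding idx_def proper_def by auto

lemma idx_Inl: "Inl m \<in> idx p \<longleftrightarrow> 1 \<le> m"
  unfolding idx_def by auto

locale PS = prob_space Pr for Pr :: "'a measure" +
  fixes p :: nat and sig :: "nat \<Rightarrow> 'a \<Rightarrow> (nat \<Rightarrow> nat)"
    and Z :: "nat set \<Rightarrow> nat \<Rightarrow> nat \<Rightarrow> 'a \<Rightarrow> real"
  assumes sig_rv: "\<And>m. 1 \<le> m \<Longrightarrow> sig m \<in> Pr \<rightarrow>\<^sub>M count_space (perms p)"
    and sig_unif: "\<And>m. 1 \<le> m \<Longrightarrow>
       distr Pr (count_space (perms p)) (sig m) = uniform_count_measure (perms p)"
    and Z_rv: "\<And>u m n. (Inr (u, m, n)) \<in> idx p \<Longrightarrow> Z u m n \<in> borel_measurable Pr"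
    and Z_id: "\<And>u m n. (Inr (u, m, n)) \<in> idx p \<Longrightarrow>
       distr Pr borel (Z u m n) = distr Pr borel (Z u 1 1)"
    and Z_L2: "\<And>u. (Inr (u, 1, 1)) \<in> idx p \<Longrightarrow> integrable Pr (\<lambda>w. (Z u 1 1 w)^2)"
    and indep: "indep_sets
       (\<lambda>k. case k of
          Inl m \<Rightarrow> {sig m -` A \<inter> space Pr | A. A \<subseteq> perms p}
        | Inr (u, m, n) \<Rightarrow> {Z u m n -` B \<inter> space Pr | B. B \<in> sets borel})
       (idx p)"
begin

lemma GG_indep:
  assumes h: "\<And>k. h k \<in> borel_measurable borel"
  shows "indep_vars (\<lambda>_. borel) (GG sig Z s h) (idx p)"
  unfolding indep_vars_def2
proof safe
  fix k assume k: "k \<in> idx p"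
  show "random_variable borel (GG sig Z s h k)"
  proof (cases k)
    case (Inl m)
    then have m: "1 \<le> m" using k idx_Inl by auto
    have "(\<lambda>w. (\<lambda>t. if t = s m then 1 else 0::real) (sig m w)) \<in> borel_measurable Pr"
      by (rule measurable_compose[OF sig_rv[OF m]]) simp
    then show ?thesis using Inl by (simp add: Ind_fun)
  next
    case (Inr a)
    then obtain u m n where a: "k = Inr (u, m, n)" by (cases a) auto
    have "(\<lambda>w. h k (Z u m n w)) \<in> borel_measurable Pr"
      by (rule measurable_compose[OF Z_rv h]) (use k a in auto)
    then show ?thesis using a by simp
  qed
next
  show "indep_sets (\<lambda>k. {GG sig Z s h k -` A \<inter> space Pr |A. A \<in> sets borel}) (idx p)"
  proof (rule indep_sets_mono_sets[OF indep])
    fix k assume k: "k \<in> idx p"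
    show "{GG sig Z s h k -` A \<inter> space Pr |A. A \<in> sets borel} \<subseteq>
      (case k of
          Inl m \<Rightarrow> {sig m -` A \<inter> space Pr | A. A \<subseteq> perms p}
        | Inr (u, m, n) \<Rightarrow> {Z u m n -` B \<inter> space Pr | B. B \<in> sets borel})"
    proof (cases k)
      case (Inl m)
      then have m: "1 \<le> m" using k idx_Inl by auto
      have sp: "\<And>w. w \<in> space Pr \<Longrightarrow> sig m w \<in> perms p"
        using measurable_space[OF sig_rv[OF m]] by simp
      have *: "\<And>A. A \<in> sets (borel :: real measure) \<Longrightarrow>
        GG sig Z s h k -` A \<inter> space Pr = sig m -` {t \<in> perms p. (if t = s m then 1 else 0::real) \<in> A} \<inter> space Pr"
        using sp Inl by (auto simp: Ind_def; metis sp)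
      then show ?thesis unfolding Inl sum.case
      proof (intro subsetI)
        fix x assume "x \<in> {GG sig Z s h (Inl m) -` A \<inter> space Pr |A. A \<in> sets borel}"
        then obtain A where "A \<in> sets (borel :: real measure)" "x = GG sig Z s h (Inl m) -` A \<inter> space Pr" by blast
        then have "x = sig m -` {t \<in> perms p. (if t = s m then 1 else 0::real) \<in> A} \<inter> space Pr"
          using *[of A] Inl by simp
        then show "x \<in> {sig m -` A \<inter> space Pr |A. A \<subseteq> perms p}"
          by (intro CollectI exI[of _ "{t \<in> perms p. (if t = s m then 1 else 0::real) \<in> A}"]) simp
      qed
    next
      case (Inr a)
      then obtain u m n where a: "k = Inr (u, m, n)" by (cases a) auto
      have *: "\<And>A. A \<in> sets (borel :: real measure) \<Longrightarrow>
        GG sig Z s h k -` A \<inter> space Pr = Z u m n -` (h k -` A) \<inter> space Pr \<and> h k -` A \<in> sets borel"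
        using measurable_sets[OF h] a by auto
      then show ?thesis unfolding a sum.case prod.case
      proof (intro subsetI)
        fix x assume "x \<in> {GG sig Z s h (Inr (u, m, n)) -` A \<inter> space Pr |A. A \<in> sets borel}"
        then obtain A where "A \<in> sets (borel :: real measure)" "x = GG sig Z s h (Inr (u, m, n)) -` A \<inter> space Pr" by blast
        then have "x = Z u m n -` (h k -` A) \<inter> space Pr" "h k -` A \<in> sets borel"
          using *[of A] a by simp_all
        then show "x \<in> {Z u m n -` B \<inter> space Pr |B. B \<in> sets borel}"
          by blast
      qed
    qed
  qed
qed

lemma GG_prod:
  assumes h: "\<And>k. h k \<in> borel_measurable borel" and J: "finite J" "J \<subseteq> idx p"
    and int: "\<And>k. k \<in> J \<Longrightarrow> integrable Pr (GG sig Z s h k)"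
  shows "has_bochner_integral Pr (\<lambda>w. \<Prod>k\<in>J. GG sig Z s h k w) (\<Prod>k\<in>J. expectation (GG sig Z s h k))"
proof -
  have I: "indep_vars (\<lambda>_. borel) (GG sig Z s h) J"
    by (rule indep_vars_subset[OF GG_indep[OF h] J(2)])
  show ?thesis unfolding has_bochner_integral_iff
    using indep_vars_integrable[OF J(1) I int] indep_vars_lebesgue_integral[OF J(1) I int] by simp
qed

lemma Z_transfer:
  fixes f :: "real \<Rightarrow> real"
  assumes k: "Inr (u, m, n) \<in> idx p" and f: "f \<in> borel_measurable borel"
  shows "integrable Pr (\<lambda>x. f (Z u m n x)) \<longleftrightarrow> integrable Pr (\<lambda>x. f (Z u 1 1 x))"
    and "expectation (\<lambda>x. f (Z u m n x)) = expectation (\<lambda>x. f (Z u 1 1 x))"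
proof -
  have k1: "Inr (u, 1, 1) \<in> idx p" using k by (simp add: idx_Inr)
  note [measurable] = Z_rv[OF k] Z_rv[OF k1] f
  show "integrable Pr (\<lambda>x. f (Z u m n x)) \<longleftrightarrow> integrable Pr (\<lambda>x. f (Z u 1 1 x))"
    by (metis integrable_distr_eq[OF Z_rv[OF k] f] integrable_distr_eq[OF Z_rv[OF k1] f] Z_id[OF k])
  show "expectation (\<lambda>x. f (Z u m n x)) = expectation (\<lambda>x. f (Z u 1 1 x))"
    by (metis integral_distr[OF Z_rv[OF k] f] integral_distr[OF Z_rv[OF k1] f] Z_id[OF k])
qed

lemma Z_int:
  assumes k: "Inr (u, m, n) \<in> idx p"
  shows "integrable Pr (Z u m n)" "integrable Pr (\<lambda>x. (Z u m n x)^2)"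
proof -
  have k1: "Inr (u, 1, 1) \<in> idx p" using k by (simp add: idx_Inr)
  have sq: "integrable Pr (\<lambda>x. (Z u 1 1 x)^2)" by (rule Z_L2[OF k1])
  have "integrable Pr (Z u 1 1)"
    by (rule square_integrable_imp_integrable[OF Z_rv[OF k1] sq])
  then show "integrable Pr (Z u m n)"
    using Z_transfer(1)[OF k, of "\<lambda>x. x"] by simp
  show "integrable Pr (\<lambda>x. (Z u m n x)^2)"
    using Z_transfer(1)[OF k, of "\<lambda>x. x^2"] sq by simp
qed

definition K :: real where "K = real (card (perms p))"

lemma perms_finite: "finite (perms p)"
  unfolding perms_def by (rule finite_permutations) simp

lemma K_pos: "K > 0"
proof -
  have "id \<in> perms p" unfolding perms_def by (simp add: permutes_id)
  then show ?thesis unfolding K_def using perms_finite card_gt_0_iff by force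
qed

lemma Ind_meas: "1 \<le> m \<Longrightarrow> Ind sig m s \<in> borel_measurable Pr"
proof -
  assume m: "1 \<le> m"
  have "(\<lambda>w. (\<lambda>t. if t = s then 1 else 0::real) (sig m w)) \<in> borel_measurable Pr"
    by (rule measurable_compose[OF sig_rv[OF m]]) simp
  then show ?thesis by (simp add: Ind_fun)
qed

lemma Ind_int: "1 \<le> m \<Longrightarrow> integrable Pr (Ind sig m s)"
  by (rule integrable_const_bound[where B=1]) (auto simp: Ind_def Ind_meas)

lemma Ind_exp: assumes m: "1 \<le> m" and s: "s \<in> perms p"
  shows "expectation (Ind sig m s) = 1 / K"
proof -
  have "expectation (Ind sig m s) = expectation (\<lambda>w. indicator {s} (sig m w))"
    by (simp add: Ind_fun indicator_def of_bool_def)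
  also have "\<dots> = integral\<^sup>L (distr Pr (count_space (perms p)) (sig m)) (indicator {s})"
    by (rule integral_distr[symmetric]) (auto simp: sig_rv[OF m])
  also have "\<dots> = integral\<^sup>L (uniform_count_measure (perms p)) (indicator {s})"
    by (simp add: sig_unif[OF m])
  also have "\<dots> = 1 / K"
    using s perms_finite by (simp add: measure_uniform_count_measure space_uniform_count_measure K_def)
  finally show ?thesis .
qed

definition e :: "nat set \<Rightarrow> real" where "e u = expectation (Zp p Z u 1 1)"
definition q :: "nat set \<Rightarrow> real" where "q u = expectation (\<lambda>w. (Zp p Z u 1 1 w)^2)"

lemma Zp_fun: "Zp p Z u m n = (if proper p u then Z u m n else (\<lambda>_. 0))"
  by (simp add: Zp_def fun_eq_iff)

lemma Zp_mom:
  assumes "1 \<le> m" "1 \<le> n"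
  shows "has_bochner_integral Pr (Zp p Z u m n) (e u)"
    and "has_bochner_integral Pr (\<lambda>w. (Zp p Z u m n w)^2) (q u)"
proof -
  show "has_bochner_integral Pr (Zp p Z u m n) (e u)"
  proof (cases "proper p u")
    case True
    then have k: "Inr (u, m, n) \<in> idx p" using assms by (simp add: idx_Inr)
    show ?thesis using True Z_int(1)[OF k] Z_transfer(2)[OF k, of "\<lambda>x. x"]
      by (simp add: has_bochner_integral_iff e_def Zp_fun)
  next
    case False
    then show ?thesis by (simp add: e_def Zp_fun has_bochner_integral_zero)
  qed
  show "has_bochner_integral Pr (\<lambda>w. (Zp p Z u m n w)^2) (q u)"
  proof (cases "proper p u")
    case True
    then have k: "Inr (u, m, n) \<in> idx p" using assms by (simp add: idx_Inr)
    show ?thesis using True Z_int(2)[OF k] Z_transfer(2)[OF k, of "\<lambda>x. x^2"]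
      by (simp add: has_bochner_integral_iff q_def Zp_def)
  next
    case False
    then show ?thesis by (simp add: q_def Zp_def has_bochner_integral_zero)
  qed
qed

lemma prod_split_InlInr:
  "finite Ms \<Longrightarrow> finite T \<Longrightarrow>
   (\<Prod>k\<in>Inl ` Ms \<union> Inr ` T. F k) = (\<Prod>m\<in>Ms. F (Inl m)) * (\<Prod>t\<in>T. F (Inr t))"
  by (subst prod.union_disjoint) (auto simp: prod.reindex)

lemma prod_gen:
  assumes Ms: "finite Ms" "\<And>m. m \<in> Ms \<Longrightarrow> 1 \<le> m" "\<And>m. m \<in> Ms \<Longrightarrow> s m \<in> perms p"
    and T: "finite T" "\<And>u m n. (u, m, n) \<in> T \<Longrightarrow> 1 \<le> m \<and> 1 \<le> n"
  shows "has_bochner_integral Pr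
     (\<lambda>w. (\<Prod>m\<in>Ms. Ind sig m (s m) w) * (\<Prod>(u, m, n)\<in>T. Zp p Z u m n w))
     ((1 / K) ^ card Ms * (\<Prod>(u, m, n)\<in>T. e u))"
proof (cases "\<exists>(u, m, n)\<in>T. \<not> proper p u")
  case True
  then obtain u m n where t: "(u, m, n) \<in> T" "\<not> proper p u" by auto
  have "(\<Prod>(u, m, n)\<in>T. e u) = 0"
    using t T(1) by (intro prod_zero) (auto intro!: bexI[of _ "(u, m, n)"] simp: e_def Zp_fun)
  moreover have "\<And>w. (\<Prod>(u, m, n)\<in>T. Zp p Z u m n w) = 0"
    using t T(1) by (intro prod_zero) (auto intro!: bexI[of _ "(u, m, n)"] simp: Zp_def)
  ultimately show ?thesis by (simp add: has_bochner_integral_zero)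
next
  case False
  let ?h = "\<lambda>_ x. x :: real"
  let ?J = "Inl ` Ms \<union> Inr ` T"
  have pr: "\<And>u m n. (u, m, n) \<in> T \<Longrightarrow> proper p u" using False by auto
  have J: "finite ?J" "?J \<subseteq> idx p"
    using Ms T pr by (auto simp: idx_Inr idx_Inl)
  have int: "integrable Pr (GG sig Z s ?h k)" if "k \<in> ?J" for k
    using that J(2) by (auto simp: Z_int idx_Inr) (metis Ind_int Ms(2))
  have H: "has_bochner_integral Pr (\<lambda>w. \<Prod>k\<in>?J. GG sig Z s ?h k w) (\<Prod>k\<in>?J. expectation (GG sig Z s ?h k))"
    by (rule GG_prod[OF _ J int]) simp_all
  have f: "(\<Prod>k\<in>?J. GG sig Z s ?h k w) = (\<Prod>m\<in>Ms. Ind sig m (s m) w) * (\<Prod>(u, m, n)\<in>T. Zp p Z u m n w)" for w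
    unfolding prod_split_InlInr[OF Ms(1) T(1)]
    by (auto intro!: prod.cong arg_cong2[where f="(*)"] simp: Zp_def pr)
  have v1: "(\<Prod>m\<in>Ms. expectation (GG sig Z s ?h (Inl m))) = (1 / K) ^ card Ms"
    using Ms by (simp add: Ind_exp)
  have v2: "(\<Prod>t\<in>T. expectation (GG sig Z s ?h (Inr t))) = (\<Prod>(u, m, n)\<in>T. e u)"
  proof (intro prod.cong refl)
    fix t assume t: "t \<in> T"
    obtain u m n where tt: "t = (u, m, n)" by (cases t) auto
    have "has_bochner_integral Pr (Zp p Z u m n) (e u)"
      using Zp_mom(1) T(2) t tt by blast
    then show "expectation (GG sig Z s ?h (Inr t)) = (case t of (u, m, n) \<Rightarrow> e u)"
      using pr t tt by (simp add: has_bochner_integral_iff Zp_fun)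
  qed
  show ?thesis
    using H unfolding f prod_split_InlInr[OF Ms(1) T(1)] v1 v2 .
qed

lemma Ind_hb: "1 \<le> m \<Longrightarrow> s \<in> perms p \<Longrightarrow> has_bochner_integral Pr (Ind sig m s) (1 / K)"
  by (simp add: has_bochner_integral_iff Ind_int Ind_exp)

lemma diag_hb:
  assumes m: "1 \<le> m" and n: "1 \<le> n" and s: "s \<in> perms p"
  shows "has_bochner_integral Pr (\<lambda>w. Ind sig m s w * (Zp p Z u m n w)^2) (q u / K)"
proof (cases "proper p u")
  case False
  then show ?thesis by (simp add: q_def Zp_def has_bochner_integral_zero)
next
  case True
  let ?h = "\<lambda>_ x. x^2 :: real"
  let ?s = "\<lambda>_. s"
  let ?J = "{Inl m, Inr (u, m, n)}"
  have k: "Inr (u, m, n) \<in> idx p" using True m n by (simp add: idx_Inr)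
  have J: "finite ?J" "?J \<subseteq> idx p" using k m by (auto simp: idx_Inl)
  have int: "integrable Pr (GG sig Z ?s ?h k)" if "k \<in> ?J" for k
    using that Ind_int[OF m] Z_int(2)[OF k] by auto
  have H: "has_bochner_integral Pr (\<lambda>w. \<Prod>k\<in>?J. GG sig Z ?s ?h k w) (\<Prod>k\<in>?J. expectation (GG sig Z ?s ?h k))"
    by (rule GG_prod[OF _ J int]) simp_all
  have q: "expectation (\<lambda>w. (Z u m n w)^2) = q u"
    using Zp_mom(2)[OF m n, of u] True by (simp add: has_bochner_integral_iff Zp_def)
  show ?thesis using H Ind_exp[OF m s] q True by (simp add: Zp_def divide_simps)
qed

lemma A1:
  assumes "1 \<le> m" "1 \<le> n" "s \<in> perms p"
  shows "has_bochner_integral Pr (\<lambda>w. Ind sig m s w * Zp p Z u m n w) (e u / K)"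
  using prod_gen[of "{m}" "\<lambda>_. s" "{(u, m, n)}"] assms by simp

lemma A2:
  assumes "1 \<le> m" "1 \<le> n" "1 \<le> n'" "s \<in> perms p"
  shows "has_bochner_integral Pr (\<lambda>w. Ind sig m s w * Zp p Z u m n w * Zp p Z u' m n' w)
     ((e u * e u' + (if u = u' \<and> n = n' then q u - (e u)^2 else 0)) / K)"
proof (cases "u = u' \<and> n = n'")
  case True
  then show ?thesis using diag_hb[OF assms(1,2,4), of u]
    by (simp add: power2_eq_square mult.assoc)
next
  case False
  have "has_bochner_integral Pr
     (\<lambda>w. (\<Prod>m\<in>{m}. Ind sig m s w) * (\<Prod>(u, m, n)\<in>{(u, m, n), (u', m, n')}. Zp p Z u m n w))
     ((1 / K) ^ card {m} * (\<Prod>(u, m, n)\<in>{(u, m, n), (u', m, n')}. e u))"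
    by (rule prod_gen) (use assms in auto)
  moreover have "(if u = u' \<and> n = n' then q u - (e u)^2 else 0) = 0" using False by auto
  moreover have "(u, m, n) \<noteq> (u', m, n')" using False by auto
  ultimately show ?thesis by (simp add: mult.assoc)
qed

lemma C2:
  assumes "1 \<le> m" "1 \<le> m'" "m \<noteq> m'" "1 \<le> n" "1 \<le> n'" "s \<in> perms p" "s' \<in> perms p"
  shows "has_bochner_integral Pr (\<lambda>w. Ind sig m s w * Zp p Z u m n w * (Ind sig m' s' w * Zp p Z u' m' n' w))
     (e u * e u' / K^2)"
proof -
  have "has_bochner_integral Pr
     (\<lambda>w. (\<Prod>j\<in>{m, m'}. Ind sig j ((\<lambda>j. if j = m then s else s') j) w) * (\<Prod>(u, m, n)\<in>{(u, m, n), (u', m', n')}. Zp p Z u m n w))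
     ((1 / K) ^ card {m, m'} * (\<Prod>(u, m, n)\<in>{(u, m, n), (u', m', n')}. e u))"
    by (rule prod_gen) (use assms in auto)
  then show ?thesis using assms by (simp add: mult_ac power2_eq_square)
qed

lemma C1:
  assumes "1 \<le> m" "1 \<le> m'" "m \<noteq> m'" "1 \<le> n" "s \<in> perms p" "s' \<in> perms p"
  shows "has_bochner_integral Pr (\<lambda>w. Ind sig m s w * Zp p Z u m n w * Ind sig m' s' w)
     (e u / K^2)"
proof -
  have "has_bochner_integral Pr
     (\<lambda>w. (\<Prod>j\<in>{m, m'}. Ind sig j ((\<lambda>j. if j = m then s else s') j) w) * (\<Prod>(u, m, n)\<in>{(u, m, n)}. Zp p Z u m n w))
     ((1 / K) ^ card {m, m'} * (\<Prod>(u, m, n)\<in>{(u, m, n)}. e u))"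
    by (rule prod_gen) (use assms in auto)
  then show ?thesis using assms by (simp add: mult_ac power2_eq_square)
qed

lemma C0:
  assumes "1 \<le> m" "1 \<le> m'" "m \<noteq> m'" "s \<in> perms p" "s' \<in> perms p"
  shows "has_bochner_integral Pr (\<lambda>w. Ind sig m s w * Ind sig m' s' w) (1 / K^2)"
proof -
  have h1: "\<And>ma. ma \<in> {m, m'} \<Longrightarrow> 1 \<le> ma" using assms by auto
  have h2: "\<And>ma. ma \<in> {m, m'} \<Longrightarrow> (\<lambda>j. if j = m then s else s') ma \<in> perms p" using assms by auto
  show ?thesis
    using prod_gen[of "{m, m'}" "\<lambda>j. if j = m then s else s'" "{}", OF _ h1 h2] assms
    by (simp add: power2_eq_square)
qed

end

locale PS2 = PS +
  fixes i :: nat and VY :: real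
  assumes i_in: "i \<in> {1..p}"
begin

definition u1 :: "(nat \<Rightarrow> nat) \<Rightarrow> nat set" where "u1 s = Pset i s \<union> {i}"
definition u0 :: "(nat \<Rightarrow> nat) \<Rightarrow> nat set" where "u0 s = Pset i s"
definition aU :: "nat set \<Rightarrow> real" where "aU u = (if u = {} then 0 else if u = {1..p} then VY else 0)"
definition cS :: "(nat \<Rightarrow> nat) \<Rightarrow> real" where "cS s = aU (u1 s) - aU (u0 s)"
definition dS :: "(nat \<Rightarrow> nat) \<Rightarrow> real" where "dS s = e (u1 s) - e (u0 s)"
definition vv :: "nat set \<Rightarrow> real" where "vv u = q u - (e u)^2"
definition wv :: "(nat \<Rightarrow> nat) \<Rightarrow> real" where "wv s = vv (u1 s) + vv (u0 s)"
definition Yv :: "(nat \<Rightarrow> nat) \<Rightarrow> nat \<Rightarrow> nat \<Rightarrow> 'a \<Rightarrow> real" where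
  "Yv s m n w = Zp p Z (u1 s) m n w - Zp p Z (u0 s) m n w"
definition PP :: "nat \<Rightarrow> (nat \<Rightarrow> nat) \<Rightarrow> nat \<Rightarrow> 'a \<Rightarrow> real" where
  "PP N s m w = cS s + (1 / real N) * (\<Sum>n=1..N. Yv s m n w)"
definition DD :: "nat \<Rightarrow> nat \<Rightarrow> 'a \<Rightarrow> real" where
  "DD N m w = (\<Sum>s\<in>perms p. Ind sig m s w * PP N s m w)"

lemma u_facts:
  assumes s: "s \<in> perms p"
  shows "u0 s \<subseteq> {1..p}" "u1 s \<subseteq> {1..p}" "i \<notin> u0 s" "u1 s \<noteq> u0 s" "u0 s \<noteq> u1 s"
proof -
  have sp: "s permutes {1..p}" using s by (simp add: perms_def)
  have invp: "inv s permutes {1..p}" by (rule permutes_inv[OF sp])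
  have ii: "inv s i \<in> {1..p}" using permutes_in_image[OF invp] i_in by simp
  show sub: "u0 s \<subseteq> {1..p}"
  proof
    fix x assume "x \<in> u0 s"
    then obtain j where j: "j \<in> {1..<inv s i}" "x = s j" by (auto simp: u0_def Pset_def)
    then have "j \<in> {1..p}" using ii by auto
    then show "x \<in> {1..p}" using permutes_in_image[OF sp] j by simp
  qed
  then show "u1 s \<subseteq> {1..p}" using i_in by (auto simp: u1_def u0_def)
  show ni: "i \<notin> u0 s"
  proof
    assume "i \<in> u0 s"
    then obtain j where j: "j \<in> {1..<inv s i}" "i = s j" by (auto simp: u0_def Pset_def)
    then have "inv s i = j" using permutes_inv_eq[OF sp] by simp
    then show False using j by simp
  qed
  then show "u1 s \<noteq> u0 s" "u0 s \<noteq> u1 s" by (auto simp: u1_def u0_def)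
qed

lemma What_eq:
  assumes "u \<subseteq> {1..p}"
  shows "What p VY Z N u m w = aU u + (1 / real N) * (\<Sum>n=1..N. Zp p Z u m n w)"
  using assms by (auto simp: What_def aU_def Zp_def proper_def)

lemma sum_Ind:
  "(\<Sum>s\<in>perms p. Ind sig m s w * F s) = (if sig m w \<in> perms p then F (sig m w) else 0)"
proof -
  have "(\<Sum>s\<in>perms p. Ind sig m s w * F s) = (\<Sum>s\<in>perms p. if sig m w = s then F s else 0)"
    by (intro sum.cong) (auto simp: Ind_def)
  also have "\<dots> = (if sig m w \<in> perms p then F (sig m w) else 0)"
    using perms_finite by (simp add: sum.delta)
  finally show ?thesis .
qed

lemma sig_in: "1 \<le> m \<Longrightarrow> w \<in> space Pr \<Longrightarrow> sig m w \<in> perms p"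
  using measurable_space[OF sig_rv] by fastforce

lemma DD_eq:
  assumes m: "1 \<le> m" and w: "w \<in> space Pr"
  shows "What p VY Z N (Pset i (sig m w) \<union> {i}) m w - What p VY Z N (Pset i (sig m w)) m w = DD N m w"
proof -
  have s: "sig m w \<in> perms p" by (rule sig_in[OF m w])
  have e1: "Pset i (sig m w) \<union> {i} = u1 (sig m w)" by (simp add: u1_def)
  have e0: "Pset i (sig m w) = u0 (sig m w)" by (simp add: u0_def)
  show ?thesis
    unfolding e1 unfolding e0 DD_def sum_Ind using s u_facts[OF s]
    by (simp add: What_eq PP_def cS_def Yv_def sum_subtractf algebra_simps)
qed

lemma B1:
  assumes "1 \<le> m" "1 \<le> n" "s \<in> perms p"
  shows "has_bochner_integral Pr (\<lambda>w. Ind sig m s w * Yv s m n w) (dS s / K)"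
proof -
  have "has_bochner_integral Pr (\<lambda>w. Ind sig m s w * Zp p Z (u1 s) m n w - Ind sig m s w * Zp p Z (u0 s) m n w)
     (e (u1 s) / K - e (u0 s) / K)"
    by (intro has_bochner_integral_diff A1 assms)
  then show ?thesis
    by (simp add: Yv_def dS_def right_diff_distrib diff_divide_distrib)
qed

lemma M1:
  assumes N: "1 \<le> N" and m: "1 \<le> m" and s: "s \<in> perms p"
  shows "has_bochner_integral Pr (\<lambda>w. Ind sig m s w * PP N s m w) ((cS s + dS s) / K)"
proof -
  have "has_bochner_integral Pr (\<lambda>w. cS s * Ind sig m s w + 1 / real N * (\<Sum>n\<in>{1..N}. Ind sig m s w * Yv s m n w))
     (cS s * (1 / K) + 1 / real N * (\<Sum>n\<in>{1..N}. dS s / K))"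
    by (intro has_bochner_integral_add has_bochner_integral_mult_right has_bochner_integral_sum
        Ind_hb B1 m s) auto
  moreover have "cS s * (1 / K) + 1 / real N * (\<Sum>n\<in>{1..N}. dS s / K) = (cS s + dS s) / K"
    using N K_pos by (simp add: field_simps)
  moreover have "\<And>w. cS s * Ind sig m s w + 1 / real N * (\<Sum>n\<in>{1..N}. Ind sig m s w * Yv s m n w)
     = Ind sig m s w * PP N s m w"
    by (simp add: PP_def algebra_simps sum_distrib_left)
  ultimately show ?thesis by simp
qed

definition mu :: real where "mu = (\<Sum>s\<in>perms p. (cS s + dS s) / K)"

lemma E1:
  assumes N: "1 \<le> N" and m: "1 \<le> m"
  shows "has_bochner_integral Pr (DD N m) mu"
  unfolding DD_def[abs_def] mu_def
  by (intro has_bochner_integral_sum M1 N m)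

lemma hb_eq: "has_bochner_integral Pr f x \<Longrightarrow> (\<And>w. w \<in> space Pr \<Longrightarrow> f w = g w) \<Longrightarrow> x = y \<Longrightarrow>
  has_bochner_integral Pr g y"
  using has_bochner_integral_cong by blast

lemma B2:
  assumes m: "1 \<le> m" and n: "1 \<le> n" "1 \<le> n'" and s: "s \<in> perms p"
  shows "has_bochner_integral Pr (\<lambda>w. Ind sig m s w * Yv s m n w * Yv s m n' w)
    ((dS s ^ 2 + (if n = n' then wv s else 0)) / K)"
proof -
  note H = has_bochner_integral_diff[OF has_bochner_integral_diff[OF A2[OF m n s, of "u1 s" "u1 s"] A2[OF m n s, of "u1 s" "u0 s"]]
     has_bochner_integral_diff[OF A2[OF m n s, of "u0 s" "u1 s"] A2[OF m n s, of "u0 s" "u0 s"]]]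
  show ?thesis
  proof (rule hb_eq[OF H])
    fix w
    show "Ind sig m s w * Zp p Z (u1 s) m n w * Zp p Z (u1 s) m n' w - Ind sig m s w * Zp p Z (u1 s) m n w * Zp p Z (u0 s) m n' w -
        (Ind sig m s w * Zp p Z (u0 s) m n w * Zp p Z (u1 s) m n' w - Ind sig m s w * Zp p Z (u0 s) m n w * Zp p Z (u0 s) m n' w) =
        Ind sig m s w * Yv s m n w * Yv s m n' w"
      by (simp add: Yv_def algebra_simps)
  next
    show "(e (u1 s) * e (u1 s) + (if u1 s = u1 s \<and> n = n' then q (u1 s) - (e (u1 s))\<^sup>2 else 0)) / K -
        (e (u1 s) * e (u0 s) + (if u1 s = u0 s \<and> n = n' then q (u1 s) - (e (u1 s))\<^sup>2 else 0)) / K -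
        ((e (u0 s) * e (u1 s) + (if u0 s = u1 s \<and> n = n' then q (u0 s) - (e (u0 s))\<^sup>2 else 0)) / K -
         (e (u0 s) * e (u0 s) + (if u0 s = u0 s \<and> n = n' then q (u0 s) - (e (u0 s))\<^sup>2 else 0)) / K) =
        ((dS s)\<^sup>2 + (if n = n' then wv s else 0)) / K"
      using u_facts[OF s] K_pos
      by (cases "n = n'") (simp_all add: dS_def wv_def vv_def field_simps power2_eq_square)
  qed
qed

lemma dsum:
  "(\<Sum>n\<in>{1..N}. \<Sum>n'\<in>{1..N}. (x + (if n = n' then y else 0)) / K) = (real N * real N * x + real N * y) / K"
proof -
  have "(\<Sum>n\<in>{1..N}. \<Sum>n'\<in>{1..N}. (x + (if n = n' then y else 0)) / K)
      = (\<Sum>n\<in>{1..N}. (real N * x + y) / K)"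
  proof (intro sum.cong refl)
    fix n assume n: "n \<in> {1..N}"
    have "(\<Sum>n'\<in>{1..N}. (x + (if n = n' then y else 0)) / K) = (\<Sum>n'\<in>{1..N}. x / K + (if n = n' then y / K else 0))"
      by (intro sum.cong) (auto simp: add_divide_distrib)
    also have "\<dots> = real N * x / K + y / K"
      using n by (simp add: sum.distrib)
    finally show "(\<Sum>n'\<in>{1..N}. (x + (if n = n' then y else 0)) / K) = (real N * x + y) / K"
      by (simp add: add_divide_distrib)
  qed
  also have "\<dots> = (real N * real N * x + real N * y) / K"
    by (simp add: algebra_simps add_divide_distrib)
  finally show ?thesis .
qed

lemma sq_pt:
  "Ind sig m s w * (PP N s m w)^2 = cS s ^ 2 * Ind sig m s w + 2 * cS s * (1 / real N) * (\<Sum>n\<in>{1..N}. Ind sig m s w * Yv s m n w)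
     + (1 / real N)^2 * (\<Sum>n\<in>{1..N}. \<Sum>n'\<in>{1..N}. Ind sig m s w * Yv s m n w * Yv s m n' w)"
proof -
  have "(\<Sum>n\<in>{1..N}. \<Sum>n'\<in>{1..N}. Ind sig m s w * Yv s m n w * Yv s m n' w)
     = Ind sig m s w * ((\<Sum>n\<in>{1..N}. Yv s m n w) * (\<Sum>n\<in>{1..N}. Yv s m n w))"
    unfolding sum_product unfolding sum_distrib_left by (simp add: mult.assoc)
  moreover have "(\<Sum>n\<in>{1..N}. Ind sig m s w * Yv s m n w) = Ind sig m s w * (\<Sum>n\<in>{1..N}. Yv s m n w)"
    by (simp add: sum_distrib_left)
  ultimately show ?thesis
    by (simp add: PP_def power2_eq_square algebra_simps)
qed

definition E2 :: "nat \<Rightarrow> real" where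
  "E2 N = (\<Sum>s\<in>perms p. ((cS s + dS s)^2 + wv s / real N) / K)"

lemma M2:
  assumes N: "1 \<le> N" and m: "1 \<le> m"
  shows "has_bochner_integral Pr (\<lambda>w. (DD N m w)^2) (E2 N)"
proof -
  have H: "has_bochner_integral Pr (\<lambda>w. \<Sum>s\<in>perms p. cS s ^ 2 * Ind sig m s w + 2 * cS s * (1 / real N) * (\<Sum>n\<in>{1..N}. Ind sig m s w * Yv s m n w)
     + (1 / real N)^2 * (\<Sum>n\<in>{1..N}. \<Sum>n'\<in>{1..N}. Ind sig m s w * Yv s m n w * Yv s m n' w))
     (\<Sum>s\<in>perms p. cS s ^ 2 * (1 / K) + 2 * cS s * (1 / real N) * (\<Sum>n\<in>{1..N}. dS s / K)
     + (1 / real N)^2 * (\<Sum>n\<in>{1..N}. \<Sum>n'\<in>{1..N}. (dS s ^ 2 + (if n = n' then wv s else 0)) / K))"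
    by (intro has_bochner_integral_sum has_bochner_integral_add has_bochner_integral_mult_right
        Ind_hb B1 B2 m) auto
  show ?thesis
  proof (rule hb_eq[OF H])
    fix w assume w: "w \<in> space Pr"
    have "(DD N m w)^2 = (\<Sum>s\<in>perms p. Ind sig m s w * (PP N s m w)^2)"
      unfolding DD_def sum_Ind by simp
    then show "(\<Sum>s\<in>perms p. cS s ^ 2 * Ind sig m s w + 2 * cS s * (1 / real N) * (\<Sum>n\<in>{1..N}. Ind sig m s w * Yv s m n w)
     + (1 / real N)^2 * (\<Sum>n\<in>{1..N}. \<Sum>n'\<in>{1..N}. Ind sig m s w * Yv s m n w * Yv s m n' w)) = (DD N m w)^2"
      by (simp add: sq_pt)
  next
    show "(\<Sum>s\<in>perms p. cS s ^ 2 * (1 / K) + 2 * cS s * (1 / real N) * (\<Sum>n\<in>{1..N}. dS s / K)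
     + (1 / real N)^2 * (\<Sum>n\<in>{1..N}. \<Sum>n'\<in>{1..N}. (dS s ^ 2 + (if n = n' then wv s else 0)) / K)) = E2 N"
      unfolding E2_def dsum
      using N K_pos by (intro sum.cong refl) (simp add: field_simps power2_eq_square)
  qed
qed

lemma X1:
  assumes "1 \<le> m" "1 \<le> m'" "m \<noteq> m'" "1 \<le> n" "s \<in> perms p" "s' \<in> perms p"
  shows "has_bochner_integral Pr (\<lambda>w. Ind sig m s w * Yv s m n w * Ind sig m' s' w) (dS s / K^2)"
  by (rule hb_eq[OF has_bochner_integral_diff[OF C1[OF assms, of "u1 s"] C1[OF assms, of "u0 s"]]])
     (simp_all add: Yv_def dS_def algebra_simps diff_divide_distrib)

lemma X2:
  assumes "1 \<le> m" "1 \<le> m'" "m \<noteq> m'" "1 \<le> n'" "s \<in> perms p" "s' \<in> perms p"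
  shows "has_bochner_integral Pr (\<lambda>w. Ind sig m s w * (Ind sig m' s' w * Yv s' m' n' w)) (dS s' / K^2)"
proof -
  have a: "1 \<le> m'" "1 \<le> m" "m' \<noteq> m" "1 \<le> n'" "s' \<in> perms p" "s \<in> perms p" using assms by auto
  show ?thesis
    by (rule hb_eq[OF has_bochner_integral_diff[OF C1[OF a, of "u1 s'"] C1[OF a, of "u0 s'"]]])
       (simp_all add: Yv_def dS_def algebra_simps diff_divide_distrib)
qed

lemma X3:
  assumes "1 \<le> m" "1 \<le> m'" "m \<noteq> m'" "1 \<le> n" "1 \<le> n'" "s \<in> perms p" "s' \<in> perms p"
  shows "has_bochner_integral Pr (\<lambda>w. Ind sig m s w * Yv s m n w * (Ind sig m' s' w * Yv s' m' n' w))
    (dS s * dS s' / K^2)"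
  apply (rule hb_eq[OF has_bochner_integral_diff[OF
      has_bochner_integral_diff[OF C2[OF assms, of "u1 s" "u1 s'"] C2[OF assms, of "u1 s" "u0 s'"]]
      has_bochner_integral_diff[OF C2[OF assms, of "u0 s" "u1 s'"] C2[OF assms, of "u0 s" "u0 s'"]]]])
   apply (simp add: Yv_def algebra_simps)
  using K_pos apply (simp add: dS_def field_simps)
  done

lemma IP_pt: "Ind sig m s w * PP N s m w = cS s * Ind sig m s w + 1 / real N * (\<Sum>n\<in>{1..N}. Ind sig m s w * Yv s m n w)"
  by (simp add: PP_def algebra_simps sum_distrib_left)

lemma M3:
  assumes N: "1 \<le> N" and m: "1 \<le> m" "1 \<le> m'" "m \<noteq> m'"
  shows "has_bochner_integral Pr (\<lambda>w. DD N m w * DD N m' w) (mu^2)"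
proof -
  have H: "has_bochner_integral Pr (\<lambda>w. \<Sum>s\<in>perms p. \<Sum>s'\<in>perms p.
       cS s * cS s' * (Ind sig m s w * Ind sig m' s' w)
     + cS s' * (1 / real N) * (\<Sum>n\<in>{1..N}. Ind sig m s w * Yv s m n w * Ind sig m' s' w)
     + cS s * (1 / real N) * (\<Sum>n'\<in>{1..N}. Ind sig m s w * (Ind sig m' s' w * Yv s' m' n' w))
     + (1 / real N)^2 * (\<Sum>n'\<in>{1..N}. \<Sum>n\<in>{1..N}. Ind sig m s w * Yv s m n w * (Ind sig m' s' w * Yv s' m' n' w)))
     (\<Sum>s\<in>perms p. \<Sum>s'\<in>perms p.
       cS s * cS s' * (1 / K^2)
     + cS s' * (1 / real N) * (\<Sum>n\<in>{1..N}. dS s / K^2)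
     + cS s * (1 / real N) * (\<Sum>n'\<in>{1..N}. dS s' / K^2)
     + (1 / real N)^2 * (\<Sum>n'\<in>{1..N}. \<Sum>n\<in>{1..N}. dS s * dS s' / K^2))"
    by (intro has_bochner_integral_sum has_bochner_integral_add has_bochner_integral_mult_right
        C0 X1 X2 X3 m) auto
  show ?thesis
  proof (rule hb_eq[OF H])
    fix w
    show "(\<Sum>s\<in>perms p. \<Sum>s'\<in>perms p.
       cS s * cS s' * (Ind sig m s w * Ind sig m' s' w)
     + cS s' * (1 / real N) * (\<Sum>n\<in>{1..N}. Ind sig m s w * Yv s m n w * Ind sig m' s' w)
     + cS s * (1 / real N) * (\<Sum>n'\<in>{1..N}. Ind sig m s w * (Ind sig m' s' w * Yv s' m' n' w))
     + (1 / real N)^2 * (\<Sum>n'\<in>{1..N}. \<Sum>n\<in>{1..N}. Ind sig m s w * Yv s m n w * (Ind sig m' s' w * Yv s' m' n' w)))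
     = DD N m w * DD N m' w"
      unfolding DD_def sum_product IP_pt
      by (intro sum.cong refl) (simp add: algebra_simps sum_distrib_left sum_distrib_right power2_eq_square)
  next
    show "(\<Sum>s\<in>perms p. \<Sum>s'\<in>perms p.
       cS s * cS s' * (1 / K^2)
     + cS s' * (1 / real N) * (\<Sum>n\<in>{1..N}. dS s / K^2)
     + cS s * (1 / real N) * (\<Sum>n'\<in>{1..N}. dS s' / K^2)
     + (1 / real N)^2 * (\<Sum>n'\<in>{1..N}. \<Sum>n\<in>{1..N}. dS s * dS s' / K^2)) = mu^2"
      unfolding mu_def power2_eq_square[of "sum _ _"] sum_product
      using N K_pos by (intro sum.cong refl) (simp add: field_simps power2_eq_square)
  qed
qed

lemma M23:
  assumes N: "1 \<le> N" and m: "1 \<le> m" "1 \<le> m'"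
  shows "has_bochner_integral Pr (\<lambda>w. DD N m w * DD N m' w) (if m = m' then E2 N else mu^2)"
proof (cases "m = m'")
  case True
  then show ?thesis using M2[OF N m(1)] by (simp add: power2_eq_square)
next
  case False
  then show ?thesis using M3[OF N m False] by simp
qed

definition ETA :: "nat \<Rightarrow> nat \<Rightarrow> 'a \<Rightarrow> real" where
  "ETA N M w = 1 / (real M * VY) * (\<Sum>m\<in>{1..M}. DD N m w)"

lemma msum:
  "(\<Sum>m\<in>{1..M}. \<Sum>m'\<in>{1..M}. (if m = m' then x else y)) = real M * x + (real M * real M - real M) * (y::real)"
proof -
  have "(\<Sum>m\<in>{1..M}. \<Sum>m'\<in>{1..M}. (if m = m' then x else y)) = (\<Sum>m\<in>{1..M}. \<Sum>m'\<in>{1..M}. y + (if m = m' then x - y else 0))"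
    by (intro sum.cong) auto
  also have "\<dots> = (\<Sum>m\<in>{1..M}. real M * y + (x - y))"
    by (intro sum.cong refl) (simp add: sum.distrib)
  also have "\<dots> = real M * x + (real M * real M - real M) * y"
    by (simp add: algebra_simps)
  finally show ?thesis .
qed

lemma ETA_var:
  assumes N: "1 \<le> N" and M: "1 \<le> M"
  shows "variance (ETA N M) = (E2 N - mu^2) / (real M * VY^2)"
proof -
  have H1: "has_bochner_integral Pr (ETA N M) (1 / (real M * VY) * (\<Sum>m\<in>{1..M}. mu))"
    unfolding ETA_def[abs_def]
    by (intro has_bochner_integral_mult_right has_bochner_integral_sum E1 N) auto
  have H2: "has_bochner_integral Pr (\<lambda>w. (1 / (real M * VY))^2 * (\<Sum>m\<in>{1..M}. \<Sum>m'\<in>{1..M}. DD N m w * DD N m' w))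
     ((1 / (real M * VY))^2 * (\<Sum>m\<in>{1..M}. \<Sum>m'\<in>{1..M}. (if m = m' then E2 N else mu^2)))"
    by (intro has_bochner_integral_mult_right has_bochner_integral_sum M23 N) auto
  have H2': "has_bochner_integral Pr (\<lambda>w. (ETA N M w)^2)
     ((1 / (real M * VY))^2 * (\<Sum>m\<in>{1..M}. \<Sum>m'\<in>{1..M}. (if m = m' then E2 N else mu^2)))"
    by (rule hb_eq[OF H2]) (simp_all add: ETA_def power2_eq_square sum_product)
  have "variance (ETA N M) = expectation (\<lambda>w. (ETA N M w)^2) - (expectation (ETA N M))^2"
    using H1 H2' by (intro variance_eq) (auto simp: has_bochner_integral_iff)
  also have "\<dots> = (1 / (real M * VY))^2 * (real M * E2 N + (real M * real M - real M) * mu^2)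
      - (1 / (real M * VY) * (real M * mu))^2"
    using H1 H2'[unfolded msum] by (simp add: has_bochner_integral_iff)
  also have "\<dots> = (E2 N - mu^2) / (real M * VY^2)"
  proof (cases "VY = 0")
    case True then show ?thesis by simp
  next
    case False
    then show ?thesis using M by (simp add: field_simps power2_eq_square)
  qed
  finally show ?thesis .
qed

definition Qs :: real where "Qs = (\<Sum>s\<in>perms p. (cS s + dS s)^2 / K)"
definition Bs :: real where "Bs = (\<Sum>s\<in>perms p. wv s / K)"

lemma E2_eq: "E2 N = Qs + Bs / real N"
  unfolding E2_def Qs_def Bs_def
  by (simp add: add_divide_distrib sum.distrib sum_divide_distrib ac_simps)

lemma Qs_ge: "mu^2 \<le> Qs"
proof -
  let ?x = "\<lambda>s. cS s + dS s"
  have Kc: "(\<Sum>s\<in>perms p. 1 / K) = 1" using K_pos by (simp add: K_def)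
  have mu': "(\<Sum>s\<in>perms p. ?x s / K) = mu" by (simp add: mu_def)
  have "0 \<le> (\<Sum>s\<in>perms p. (?x s - mu)^2 / K)"
    using K_pos by (intro sum_nonneg) simp
  also have "(\<Sum>s\<in>perms p. (?x s - mu)^2 / K) = (\<Sum>s\<in>perms p. (?x s)^2 / K - 2 * mu * (?x s / K) + mu^2 * (1 / K))"
    using K_pos by (intro sum.cong refl) (simp add: power2_diff field_simps)
  also have "\<dots> = Qs - 2 * mu * mu + mu^2 * 1"
    unfolding sum.distrib sum_subtractf sum_distrib_left[symmetric] Kc mu' Qs_def by simp
  finally show ?thesis by (simp add: power2_eq_square)
qed

end


theorem proposition6:
  fixes p i C :: nat
    and Q :: "'b measure" and X :: "'b \<Rightarrow> nat \<Rightarrow> real" and f :: "(nat \<Rightarrow> real) \<Rightarrow> real"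
    and W :: "nat set \<Rightarrow> real"
    and Pr :: "'a measure" and sig :: "nat \<Rightarrow> 'a \<Rightarrow> (nat \<Rightarrow> nat)"
    and Z :: "nat set \<Rightarrow> nat \<Rightarrow> nat \<Rightarrow> 'a \<Rightarrow> real"
  assumes i: "i \<in> {1..p}"
    and C: "1 \<le> C"
    \<comment> \<open>the model: X random vector, Y = f(X) in L^2, Var(Y) > 0\<close>
    and Q: "prob_space Q"
    and X: "X \<in> Q \<rightarrow>\<^sub>M PiM {1..p} (\<lambda>_. borel)"
    and f: "f \<in> borel_measurable (PiM {1..p} (\<lambda>_. borel))"
    and fL2: "integrable Q (\<lambda>w. (f (X w))^2)"
    and VarY: "prob_space.variance Q (Yof f X) > 0"
    \<comment> \<open>W_u is V_u for all u, or E_u for all u\<close>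
    and W: "W = Vu Q X f \<or> W = Eu p Q X f"
    \<comment> \<open>the Monte-Carlo samples\<close>
    and Pr: "prob_space Pr"
    and sig_rv: "\<And>m. 1 \<le> m \<Longrightarrow> sig m \<in> Pr \<rightarrow>\<^sub>M count_space (perms p)"
    and sig_unif: "\<And>m. 1 \<le> m \<Longrightarrow>
       distr Pr (count_space (perms p)) (sig m) = uniform_count_measure (perms p)"
    and Z_rv: "\<And>u m n. (Inr (u, m, n)) \<in> idx p \<Longrightarrow> Z u m n \<in> borel_measurable Pr"
    and Z_id: "\<And>u m n. (Inr (u, m, n)) \<in> idx p \<Longrightarrow>
       distr Pr borel (Z u m n) = distr Pr borel (Z u 1 1)"
    and Z_L2: "\<And>u. (Inr (u, 1, 1)) \<in> idx p \<Longrightarrow> integrable Pr (\<lambda>w. (Z u 1 1 w)^2)"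
    and Z_unbiased: "\<And>u. (Inr (u, 1, 1)) \<in> idx p \<Longrightarrow>
       prob_space.expectation Pr (Z u 1 1) = W u"
    and indep: "prob_space.indep_sets Pr
       (\<lambda>k. case k of
          Inl m \<Rightarrow> {sig m -` A \<inter> space Pr | A. A \<subseteq> perms p}
        | Inr (u, m, n) \<Rightarrow> {Z u m n -` B \<inter> space Pr | B. B \<in> sets borel})
       (idx p)"
  shows "\<forall>N M. 1 \<le> N \<and> 1 \<le> M \<and> M * N = C \<longrightarrow>
     prob_space.variance Pr (eta_hat p (prob_space.variance Q (Yof f X)) sig Z i 1 C)
       \<le> prob_space.variance Pr (eta_hat p (prob_space.variance Q (Yof f X)) sig Z i N M)"
proof -
  let ?VY = "prob_space.variance Q (Yof f X)"
  interpret PS2 Pr p sig Z i ?VY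
    using Pr sig_rv sig_unif Z_rv Z_id Z_L2 indep i
    by (auto intro!: PS2.intro PS.intro PS_axioms.intro PS2_axioms.intro)
  have veq: "variance (eta_hat p ?VY sig Z i N M) = variance (ETA N M)" if M: "1 \<le> M" for N M
  proof -
    have pt: "eta_hat p ?VY sig Z i N M w = ETA N M w" if w: "w \<in> space Pr" for w
      unfolding eta_hat_def ETA_def using DD_eq[OF _ w]
      by (intro arg_cong2[where f="(*)"] refl sum.cong) auto
    have ex: "expectation (eta_hat p ?VY sig Z i N M) = expectation (ETA N M)"
      by (rule Bochner_Integration.integral_cong[OF refl pt])
    show ?thesis
      by (rule Bochner_Integration.integral_cong[OF refl]) (simp add: pt ex)
  qed
  show ?thesis
  proof (intro allI impI, elim conjE)
    fix N M assume N: "1 \<le> N" and M: "1 \<le> M" and MN: "M * N = C"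
    have C1: "1 \<le> C" by (rule C)
    let ?A = "Qs - mu^2"
    let ?V = "?VY^2"
    have A: "0 \<le> ?A" using Qs_ge by simp
    have lhs: "variance (eta_hat p ?VY sig Z i 1 C) = (?A + Bs) / (real M * real N * ?V)"
      unfolding veq[OF C1] ETA_var[OF order_refl C1] E2_eq
      using MN[symmetric] by (simp add: algebra_simps)
    have rhs: "variance (eta_hat p ?VY sig Z i N M) = (?A + Bs / real N) / (real M * ?V)"
      unfolding veq[OF M] ETA_var[OF N M] E2_eq by (simp add: algebra_simps)
    show "variance (eta_hat p ?VY sig Z i 1 C) \<le> variance (eta_hat p ?VY sig Z i N M)"
      unfolding lhs rhs
    proof (cases "?V = 0")
      case True then show "(?A + Bs) / (real M * real N * ?V) \<le> (?A + Bs / real N) / (real M * ?V)" by simp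
    next
      case False
      then have Vp: "0 < ?V" by simp
      have "(?A + Bs) / (real M * real N * ?V) \<le> (?A * real N + Bs) / (real M * real N * ?V)"
      proof (rule divide_right_mono)
        show "?A + Bs \<le> ?A * real N + Bs" using A N
          by (simp add: mult_le_cancel_left1)
        show "0 \<le> real M * real N * ?V" using Vp by simp
      qed
      also have "\<dots> = (?A + Bs / real N) / (real M * ?V)"
        using N M Vp by (simp add: field_simps)
      finally show "(?A + Bs) / (real M * real N * ?V) \<le> (?A + Bs / real N) / (real M * ?V)" .
    qed
  qed
qed

end
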